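(* Let $(X_t)_{t\ge0}$ be a positive recurrent continuous-time Markov chain on a countable state space $E$ with semigroup $P_t$ and stationary distribution $\pi$, and assume $P_t$ is reversible with respect to $\pi$. Let $f:E\to[1,\infty)$ with $\pi(f^2)<\infty$. Then $P_t$ has exponential $f$-ergodicity if and only if the semigroup $P^f_t$ converges exponentially in the $L^2(\nu)$-norm. Moreover $\varepsilon_{\max}=\sigma_{\max}$.
   Context: $\|\mu\|_f:=\sup_{|g|\le f}|\mu(g)|=\sum_if(i)|\mu_i|$ for a signed measure $\mu$. Exponential $f$-ergodicity: there exist $\varepsilon>0$ and finite constants $C(i,f)$ with $\|P_t(i,\cdot)-\pi\|_f\le C(i,f)e^{-\varepsilon t}$ for all $i\in E,t\ge0$; $\varepsilon_{\max}$ is the supremum of such $\varepsilon$. The $h$-transform: $P_t^fg=\frac1fP_t(fg)$, $\pi^f(g)(i)=\frac1{f(i)}\sum_j\pi_jf(j)g(j)$, $\nu_i=f(i)^2\pi_i$. $P^f_t$ converges exponentially in the $L^2(\nu)$-norm if there is $\sigma>0$ with $\|P^f_tg-\pi^f(g)\|_{L^2(\nu)}\le \|g-\pi^f(g)\|_{L^2(\nu)}e^{-\sigma t}$ for all $t\ge0$, $g\in L^2(\nu)$; the largest such $\sigma$ is $\sigma_{\max}$. *)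

theory Defs
  imports "HOL-Analysis.Analysis"
begin

text \<open>Transition functions of a continuous-time Markov chain on a countable state
  space 'a: P t i j is the probability of going from i to j in time t (t \<ge> 0).\<close>

definition markov_semigroup :: "(real \<Rightarrow> 'a \<Rightarrow> 'a \<Rightarrow> real) \<Rightarrow> bool" where
  "markov_semigroup P \<longleftrightarrow>
     (\<forall>t\<ge>0. \<forall>i j. P t i j \<ge> 0) \<and>
     (\<forall>t\<ge>0. \<forall>i. ((\<lambda>j. P t i j) has_sum 1) UNIV) \<and>
     (\<forall>i j. P 0 i j = (if i = j then 1 else 0)) \<and>
     (\<forall>s\<ge>0. \<forall>t\<ge>0. \<forall>i k. ((\<lambda>j. P s i j * P t j k) has_sum P (s + t) i k) UNIV) \<and>
     (\<forall>i. ((\<lambda>t. P t i i) \<longlongrightarrow> 1) (at_right 0))"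

definition irreducible_chain :: "(real \<Rightarrow> 'a \<Rightarrow> 'a \<Rightarrow> real) \<Rightarrow> bool" where
  "irreducible_chain P \<longleftrightarrow> (\<forall>i j. \<exists>t>0. P t i j > 0)"

definition stationary_distribution :: "(real \<Rightarrow> 'a \<Rightarrow> 'a \<Rightarrow> real) \<Rightarrow> ('a \<Rightarrow> real) \<Rightarrow> bool" where
  "stationary_distribution P \<pi> \<longleftrightarrow>
     (\<forall>i. \<pi> i \<ge> 0) \<and> (\<pi> has_sum 1) UNIV \<and>
     (\<forall>t\<ge>0. \<forall>j. ((\<lambda>i. \<pi> i * P t i j) has_sum \<pi> j) UNIV)"

text \<open>Positive recurrence (for an irreducible standard transition function this is
  equivalent to the existence of a stationary distribution).\<close>
definition positive_recurrent :: "(real \<Rightarrow> 'a \<Rightarrow> 'a \<Rightarrow> real) \<Rightarrow> bool" where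
  "positive_recurrent P \<longleftrightarrow> markov_semigroup P \<and> irreducible_chain P \<and>
     (\<exists>\<pi>. stationary_distribution P \<pi>)"

definition reversible :: "(real \<Rightarrow> 'a \<Rightarrow> 'a \<Rightarrow> real) \<Rightarrow> ('a \<Rightarrow> real) \<Rightarrow> bool" where
  "reversible P \<pi> \<longleftrightarrow> (\<forall>t\<ge>0. \<forall>i j. \<pi> i * P t i j = \<pi> j * P t j i)"

definition exp_f_ergodic_rate ::
  "(real \<Rightarrow> 'a \<Rightarrow> 'a \<Rightarrow> real) \<Rightarrow> ('a \<Rightarrow> real) \<Rightarrow> ('a \<Rightarrow> real) \<Rightarrow> real \<Rightarrow> bool" where
  "exp_f_ergodic_rate P \<pi> f \<epsilon> \<longleftrightarrow> \<epsilon> > 0 \<and>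
     (\<exists>C :: 'a \<Rightarrow> real. \<forall>i. \<forall>t\<ge>0.
        (\<lambda>j. f j * \<bar>P t i j - \<pi> j\<bar>) summable_on UNIV \<and>
        (\<Sum>\<^sub>\<infinity>j. f j * \<bar>P t i j - \<pi> j\<bar>) \<le> C i * exp (- \<epsilon> * t))"

definition exp_f_ergodic ::
  "(real \<Rightarrow> 'a \<Rightarrow> 'a \<Rightarrow> real) \<Rightarrow> ('a \<Rightarrow> real) \<Rightarrow> ('a \<Rightarrow> real) \<Rightarrow> bool" where
  "exp_f_ergodic P \<pi> f \<longleftrightarrow> (\<exists>\<epsilon>. exp_f_ergodic_rate P \<pi> f \<epsilon>)"

definition eps_max ::
  "(real \<Rightarrow> 'a \<Rightarrow> 'a \<Rightarrow> real) \<Rightarrow> ('a \<Rightarrow> real) \<Rightarrow> ('a \<Rightarrow> real) \<Rightarrow> ereal" where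
  "eps_max P \<pi> f = Sup (ereal ` {\<epsilon>. exp_f_ergodic_rate P \<pi> f \<epsilon>})"

definition h_transform ::
  "(real \<Rightarrow> 'a \<Rightarrow> 'a \<Rightarrow> real) \<Rightarrow> ('a \<Rightarrow> real) \<Rightarrow> real \<Rightarrow> ('a \<Rightarrow> real) \<Rightarrow> 'a \<Rightarrow> real" where
  "h_transform P f t g i = (\<Sum>\<^sub>\<infinity>j. P t i j * (f j * g j)) / f i"

definition pi_f :: "('a \<Rightarrow> real) \<Rightarrow> ('a \<Rightarrow> real) \<Rightarrow> ('a \<Rightarrow> real) \<Rightarrow> 'a \<Rightarrow> real" where
  "pi_f \<pi> f g i = (\<Sum>\<^sub>\<infinity>j. \<pi> j * f j * g j) / f i"

definition nu :: "('a \<Rightarrow> real) \<Rightarrow> ('a \<Rightarrow> real) \<Rightarrow> 'a \<Rightarrow> real" where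
  "nu \<pi> f i = (f i)^2 * \<pi> i"

definition in_L2 :: "('a \<Rightarrow> real) \<Rightarrow> ('a \<Rightarrow> real) \<Rightarrow> bool" where
  "in_L2 \<mu> g \<longleftrightarrow> (\<lambda>i. \<mu> i * (g i)^2) summable_on UNIV"

definition L2_norm :: "('a \<Rightarrow> real) \<Rightarrow> ('a \<Rightarrow> real) \<Rightarrow> real" where
  "L2_norm \<mu> g = sqrt (\<Sum>\<^sub>\<infinity>i. \<mu> i * (g i)^2)"

definition L2_exp_conv_rate ::
  "(real \<Rightarrow> 'a \<Rightarrow> 'a \<Rightarrow> real) \<Rightarrow> ('a \<Rightarrow> real) \<Rightarrow> ('a \<Rightarrow> real) \<Rightarrow> real \<Rightarrow> bool" where
  "L2_exp_conv_rate P \<pi> f \<sigma> \<longleftrightarrow> \<sigma> > 0 \<and>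
     (\<forall>t\<ge>0. \<forall>g. in_L2 (nu \<pi> f) g \<longrightarrow>
        in_L2 (nu \<pi> f) (\<lambda>i. h_transform P f t g i - pi_f \<pi> f g i) \<and>
        L2_norm (nu \<pi> f) (\<lambda>i. h_transform P f t g i - pi_f \<pi> f g i)
          \<le> L2_norm (nu \<pi> f) (\<lambda>i. g i - pi_f \<pi> f g i) * exp (- \<sigma> * t))"

definition L2_exp_conv ::
  "(real \<Rightarrow> 'a \<Rightarrow> 'a \<Rightarrow> real) \<Rightarrow> ('a \<Rightarrow> real) \<Rightarrow> ('a \<Rightarrow> real) \<Rightarrow> bool" where
  "L2_exp_conv P \<pi> f \<longleftrightarrow> (\<exists>\<sigma>. L2_exp_conv_rate P \<pi> f \<sigma>)"

definition sigma_max ::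
  "(real \<Rightarrow> 'a \<Rightarrow> 'a \<Rightarrow> real) \<Rightarrow> ('a \<Rightarrow> real) \<Rightarrow> ('a \<Rightarrow> real) \<Rightarrow> ereal" where
  "sigma_max P \<pi> f = Sup (ereal ` {\<sigma>. L2_exp_conv_rate P \<pi> f \<sigma>})"

end

theory Submission
  imports Defs
begin



lemma summable_by_bound:
  fixes f :: "'a \<Rightarrow> real"
  assumes "g summable_on A" "\<And>x. x \<in> A \<Longrightarrow> \<bar>f x\<bar> \<le> g x"
  shows "f summable_on A"
proof -
  have "(\<lambda>x. \<bar>f x\<bar>) summable_on A"
    by (rule summable_on_comparison_test[OF assms(1)]) (use assms(2) in auto)
  then show ?thesis by (subst summable_on_iff_abs_summable_on_real) simp
qed

lemma summable_on_div:
  fixes f :: "'a \<Rightarrow> real"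
  assumes "f summable_on A" shows "(\<lambda>x. f x / c) summable_on A"
  using summable_on_cmult_left[OF assms, of "1/c"] by (simp add: divide_inverse)

lemma has_sum_finite_sum:
  fixes F :: "'b \<Rightarrow> 'a \<Rightarrow> real"
  assumes "finite S" "\<And>j. j \<in> S \<Longrightarrow> ((\<lambda>i. F j i) has_sum a j) A"
  shows "((\<lambda>i. \<Sum>j\<in>S. F j i) has_sum (\<Sum>j\<in>S. a j)) A"
  using assms
proof (induction S rule: finite_induct)
  case empty then show ?case by simp
next
  case (insert x S)
  then show ?case by (simp add: has_sum_add)
qed

lemma weighted_CS:
  fixes p a b :: "'a \<Rightarrow> real"
  assumes "\<And>i. i \<in> I \<Longrightarrow> p i \<ge> 0"
  shows "(\<Sum>i\<in>I. p i * a i * b i)\<^sup>2 \<le> (\<Sum>i\<in>I. p i * (a i)\<^sup>2) * (\<Sum>i\<in>I. p i * (b i)\<^sup>2)"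
proof -
  have "(\<Sum>i\<in>I. (sqrt (p i) * a i) * (sqrt (p i) * b i))\<^sup>2 \<le> (\<Sum>i\<in>I. (sqrt (p i) * a i)\<^sup>2) * (\<Sum>i\<in>I. (sqrt (p i) * b i)\<^sup>2)"
    by (rule Cauchy_Schwarz_ineq_sum)
  moreover have "(\<Sum>i\<in>I. (sqrt (p i) * a i) * (sqrt (p i) * b i)) = (\<Sum>i\<in>I. p i * a i * b i)"
    by (rule sum.cong) (use assms in \<open>auto simp: algebra_simps\<close>)
  moreover have "\<And>c. (\<Sum>i\<in>I. (sqrt (p i) * c i)\<^sup>2) = (\<Sum>i\<in>I. p i * (c i)\<^sup>2)"
    by (rule sum.cong) (use assms in \<open>auto simp: power_mult_distrib\<close>)
  ultimately show ?thesis by simp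
qed

lemma amgm_weighted:
  fixes x y p :: real
  assumes "p > 0"
  shows "\<bar>x * y\<bar> \<le> (x\<^sup>2 / p + p * y\<^sup>2) / 2"
proof -
  have "0 \<le> (\<bar>x\<bar> - p * \<bar>y\<bar>)\<^sup>2 / p" using assms by simp
  also have "\<dots> = x\<^sup>2 / p + p * y\<^sup>2 - 2 * \<bar>x * y\<bar>"
    using assms by (simp add: power2_eq_square field_simps abs_mult)
  finally show ?thesis by simp
qed

locale mc =
  fixes P :: "real \<Rightarrow> 'a \<Rightarrow> 'a \<Rightarrow> real" and \<pi> :: "'a \<Rightarrow> real"
  assumes Pnn: "\<And>t i j. t \<ge> 0 \<Longrightarrow> P t i j \<ge> 0"
    and Psum: "\<And>t i. t \<ge> 0 \<Longrightarrow> ((\<lambda>j. P t i j) has_sum 1) UNIV"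
    and P0: "\<And>i j. P 0 i j = (if i = j then 1 else 0)"
    and CK: "\<And>s t i k. s \<ge> 0 \<Longrightarrow> t \<ge> 0 \<Longrightarrow> ((\<lambda>j. P s i j * P t j k) has_sum P (s + t) i k) UNIV"
    and pipos: "\<And>i. \<pi> i > 0"
    and pisum: "(\<pi> has_sum 1) UNIV"
    and rev: "\<And>t i j. t \<ge> 0 \<Longrightarrow> \<pi> i * P t i j = \<pi> j * P t j i"
begin

definition T :: "real \<Rightarrow> ('a \<Rightarrow> real) \<Rightarrow> 'a \<Rightarrow> real" where
  "T t w i = (\<Sum>\<^sub>\<infinity>j. P t i j * w j)"

lemma P_ratio: "t \<ge> 0 \<Longrightarrow> P t i j / \<pi> j = P t j i / \<pi> i"
  using rev[of t i j] pipos[of i] pipos[of j] by (simp add: field_simps)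

lemma summable_PP: "t \<ge> 0 \<Longrightarrow> (\<lambda>j. P t i j * P t j i / \<pi> i) summable_on UNIV"
  using has_sum_cmult_left[OF CK[of t t i i], of "1 / \<pi> i"]
  by (auto simp: summable_on_def)

lemma summable_Pw:
  assumes "t \<ge> 0" "(\<lambda>j. \<pi> j * (w j)\<^sup>2) summable_on UNIV"
  shows "(\<lambda>j. P t i j * w j) summable_on UNIV"
proof (rule summable_by_bound)
  show "(\<lambda>j. (P t i j * P t j i / \<pi> i + \<pi> j * (w j)\<^sup>2) / 2) summable_on UNIV"
    using summable_on_add[OF summable_PP[OF assms(1), of i] assms(2)]
    by (rule summable_on_div)
next
  fix j :: 'a
  have "(P t i j)\<^sup>2 / \<pi> j = P t i j * (P t i j / \<pi> j)" by (simp add: power2_eq_square)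
  also have "\<dots> = P t i j * (P t j i / \<pi> i)" using P_ratio[OF assms(1), of i j] by simp
  finally have "(P t i j)\<^sup>2 / \<pi> j = P t i j * P t j i / \<pi> i" by simp
  then show "\<bar>P t i j * w j\<bar> \<le> (P t i j * P t j i / \<pi> i + \<pi> j * (w j)\<^sup>2) / 2"
    using amgm_weighted[OF pipos[of j], of "P t i j" "w j"] by simp
qed

end




lemma iter_bound:
  fixes X A K b :: real
  assumes "X \<ge> 0" "A \<ge> 0" "b > 0" "\<And>n::nat. X^(2^n) \<le> A^(2^n - 1) * K * b^(2^n)"
  shows "X \<le> b * A"
proof (cases "A = 0")
  case True
  have "X^2 \<le> 0" using assms(4)[of 1] True by simp
  then have "X = 0" by simp
  then show ?thesis using True by simp
next
  case False
  then have A: "A > 0" using assms(2) by simp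
  show ?thesis
  proof (rule ccontr)
    assume "\<not> X \<le> b * A"
    then have XG: "X > b * A" by simp
    define q where "q = X / (b * A)"
    have q1: "q > 1" using XG A assms(3) by (simp add: q_def)
    have Xq: "X = q * b * A" using A assms(3) by (simp add: q_def)
    have bound: "q^(2^n) * A \<le> K" for n :: nat
    proof -
      define N :: nat where "N = 2^n"
      have N1: "N \<ge> 1" by (simp add: N_def)
      have "q^N * b^N * (A * A^(N-1)) = X^N" using N1
      proof -
        have "A * A^(N-1) = A^N" using N1 by (cases N) auto
        then show ?thesis by (simp add: Xq power_mult_distrib)
      qed
      also have "\<dots> \<le> A^(N - 1) * K * b^N" using assms(4)[of n] by (simp add: N_def)
      finally have "(q^N * A) * (b^N * A^(N-1)) \<le> K * (b^N * A^(N-1))"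
        by (simp add: algebra_simps)
      moreover have "b^N * A^(N-1) > 0" using A assms(3) by simp
      ultimately show ?thesis unfolding N_def by (metis mult_right_le_imp_le)
    qed
    obtain n where n: "K / A < q^n" using real_arch_pow[OF q1] by blast
    have "q^n \<le> q^(2^n)" using q1 by (intro power_increasing) (auto intro: less_imp_le[OF less_exp])
    then have "K / A < q^(2^n)" using n by simp
    then have "K < q^(2^n) * A" using A by (simp add: field_simps)
    then show False using bound[of n] by simp
  qed
qed




context mc begin

lemma pinn: "\<pi> i \<ge> 0" using pipos[of i] by simp

definition psi :: "'a set \<Rightarrow> ('a \<Rightarrow> real) \<Rightarrow> real \<Rightarrow> real" where
  "psi S w s = (\<Sum>j\<in>S. \<Sum>k\<in>S. w j * w k * \<pi> j * P s j k)"

lemma Phi_has_sum: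
  assumes "finite S" "t \<ge> 0"
  shows "((\<lambda>i. \<pi> i * (\<Sum>j\<in>S. P t i j * w j)\<^sup>2) has_sum psi S w (2*t)) UNIV"
proof -
  have eq: "\<pi> i * (\<Sum>j\<in>S. P t i j * w j)\<^sup>2 = (\<Sum>j\<in>S. \<Sum>k\<in>S. w j * w k * \<pi> j * (P t j i * P t i k))" for i
  proof -
    have "(\<Sum>j\<in>S. P t i j * w j)\<^sup>2 = (\<Sum>j\<in>S. \<Sum>k\<in>S. (P t i j * w j) * (P t i k * w k))"
      unfolding power2_eq_square sum_product ..
    then have "\<pi> i * (\<Sum>j\<in>S. P t i j * w j)\<^sup>2 = (\<Sum>j\<in>S. \<Sum>k\<in>S. \<pi> i * ((P t i j * w j) * (P t i k * w k)))"
      by (simp add: sum_distrib_left)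
    also have "\<dots> = (\<Sum>j\<in>S. \<Sum>k\<in>S. w j * w k * \<pi> j * (P t j i * P t i k))"
    proof (intro sum.cong refl)
      fix j k
      have "\<pi> i * ((P t i j * w j) * (P t i k * w k)) = w j * w k * (\<pi> i * P t i j) * P t i k"
        by (simp add: mult_ac)
      also have "\<dots> = w j * w k * (\<pi> j * P t j i) * P t i k" by (simp add: rev[OF assms(2)])
      finally show "\<pi> i * ((P t i j * w j) * (P t i k * w k)) = w j * w k * \<pi> j * (P t j i * P t i k)"
        by (simp add: mult_ac)
    qed
    finally show ?thesis .
  qed
  have "((\<lambda>i. \<Sum>j\<in>S. \<Sum>k\<in>S. w j * w k * \<pi> j * (P t j i * P t i k)) has_sum
          (\<Sum>j\<in>S. \<Sum>k\<in>S. w j * w k * \<pi> j * P (t+t) j k)) UNIV"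
    apply (rule has_sum_finite_sum[OF assms(1)])
    apply (rule has_sum_finite_sum[OF assms(1)])
    apply (rule has_sum_cmult_right)
    apply (rule CK[OF assms(2) assms(2)])
    done
  then show ?thesis unfolding psi_def eq mult_2 .
qed

lemma psi0:
  assumes "finite S"
  shows "psi S w 0 = (\<Sum>j\<in>S. \<pi> j * (w j)\<^sup>2)"
  unfolding psi_def
proof (intro sum.cong refl)
  fix j assume j: "j \<in> S"
  have "(\<Sum>k\<in>S. w j * w k * \<pi> j * P 0 j k) = (\<Sum>k\<in>S. if j = k then w j * w k * \<pi> j else 0)"
    by (intro sum.cong refl) (simp add: P0)
  also have "\<dots> = w j * w j * \<pi> j" using assms j by simp
  finally show "(\<Sum>k\<in>S. w j * w k * \<pi> j * P 0 j k) = \<pi> j * (w j)\<^sup>2"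
    by (simp add: power2_eq_square mult_ac)
qed

lemma psi_nonneg:
  assumes "finite S" "s \<ge> 0"
  shows "psi S w s \<ge> 0"
proof -
  have "((\<lambda>i. \<pi> i * (\<Sum>j\<in>S. P (s/2) i j * w j)\<^sup>2) has_sum psi S w (2*(s/2))) UNIV"
    using assms by (intro Phi_has_sum) auto
  then have "((\<lambda>i. \<pi> i * (\<Sum>j\<in>S. P (s/2) i j * w j)\<^sup>2) has_sum psi S w s) UNIV" by simp
  then show ?thesis
    by (rule has_sum_nonneg) (rule mult_nonneg_nonneg[OF pinn zero_le_power2])
qed

lemma psi_CS:
  assumes "finite S" "t \<ge> 0"
  shows "(psi S w (2*t))\<^sup>2 \<le> psi S w 0 * psi S w (2*(2*t))"
proof -
  define x where "x j = (\<Sum>k\<in>S. P (2*t) j k * w k)" for j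
  have "psi S w (2*t) = (\<Sum>j\<in>S. \<pi> j * w j * x j)"
    unfolding psi_def x_def by (simp add: sum_distrib_left mult_ac)
  then have "(psi S w (2*t))\<^sup>2 \<le> (\<Sum>j\<in>S. \<pi> j * (w j)\<^sup>2) * (\<Sum>j\<in>S. \<pi> j * (x j)\<^sup>2)"
    using weighted_CS[of S \<pi> w x] pipos by (simp add: less_imp_le)
  also have "\<dots> \<le> (\<Sum>j\<in>S. \<pi> j * (w j)\<^sup>2) * psi S w (2*(2*t))"
  proof (rule mult_left_mono)
    show "(\<Sum>j\<in>S. \<pi> j * (x j)\<^sup>2) \<le> psi S w (2*(2*t))"
      unfolding x_def
      by (rule finite_sum_le_has_sum[OF Phi_has_sum]) (use assms in \<open>auto intro: mult_nonneg_nonneg[OF pinn zero_le_power2]\<close>)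
    show "0 \<le> (\<Sum>j\<in>S. \<pi> j * (w j)\<^sup>2)" by (rule sum_nonneg) (rule mult_nonneg_nonneg[OF pinn zero_le_power2])
  qed
  finally show ?thesis using psi0[OF assms(1)] by simp
qed

lemma psi_decay:
  assumes "finite S" "(\<Sum>j\<in>S. \<pi> j * w j) = 0"
    and dec: "\<And>i j s. s \<ge> 0 \<Longrightarrow> \<bar>P s i j - \<pi> j\<bar> \<le> C i * exp (- \<epsilon> * s)"
    and "s \<ge> 0"
  shows "psi S w s \<le> (\<Sum>j\<in>S. \<Sum>k\<in>S. \<bar>w j\<bar> * \<bar>w k\<bar> * \<pi> j * C j) * exp (- \<epsilon> * s)"
proof -
  have z: "(\<Sum>j\<in>S. \<Sum>k\<in>S. w j * w k * \<pi> j * \<pi> k) = 0"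
  proof -
    have "(\<Sum>j\<in>S. \<Sum>k\<in>S. w j * w k * \<pi> j * \<pi> k) = (\<Sum>j\<in>S. \<pi> j * w j) * (\<Sum>k\<in>S. \<pi> k * w k)"
      by (simp add: sum_product mult_ac)
    then show ?thesis using assms(2) by simp
  qed
  have "psi S w s = psi S w s - (\<Sum>j\<in>S. \<Sum>k\<in>S. w j * w k * \<pi> j * \<pi> k)" using z by simp
  also have "\<dots> = (\<Sum>j\<in>S. \<Sum>k\<in>S. w j * w k * \<pi> j * (P s j k - \<pi> k))"
    unfolding psi_def by (simp add: sum_subtractf[symmetric] algebra_simps)
  also have "\<dots> \<le> (\<Sum>j\<in>S. \<Sum>k\<in>S. \<bar>w j\<bar> * \<bar>w k\<bar> * \<pi> j * C j * exp (- \<epsilon> * s))"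
  proof (intro sum_mono)
    fix j k
    have "w j * w k * \<pi> j * (P s j k - \<pi> k) \<le> \<bar>w j * w k * \<pi> j * (P s j k - \<pi> k)\<bar>" by simp
    also have "\<dots> = (\<bar>w j\<bar> * \<bar>w k\<bar> * \<pi> j) * \<bar>P s j k - \<pi> k\<bar>"
      using pipos[of j] by (simp add: abs_mult)
    also have "\<dots> \<le> (\<bar>w j\<bar> * \<bar>w k\<bar> * \<pi> j) * (C j * exp (- \<epsilon> * s))"
      by (intro mult_left_mono dec assms(4)) (use pipos[of j] in auto)
    finally show "w j * w k * \<pi> j * (P s j k - \<pi> k) \<le> \<bar>w j\<bar> * \<bar>w k\<bar> * \<pi> j * C j * exp (- \<epsilon> * s)"
      by (simp add: mult_ac)
  qed
  also have "\<dots> = (\<Sum>j\<in>S. \<Sum>k\<in>S. \<bar>w j\<bar> * \<bar>w k\<bar> * \<pi> j * C j) * exp (- \<epsilon> * s)"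
    by (simp add: sum_distrib_right)
  finally show ?thesis .
qed

end



context mc begin

lemma core_fin:
  assumes "finite S" "(\<Sum>j\<in>S. \<pi> j * w j) = 0"
    and dec: "\<And>i j s. s \<ge> 0 \<Longrightarrow> \<bar>P s i j - \<pi> j\<bar> \<le> C i * exp (- \<epsilon> * s)"
    and "t \<ge> 0"
  shows "psi S w (2*t) \<le> exp (- 2 * \<epsilon> * t) * (\<Sum>j\<in>S. \<pi> j * (w j)\<^sup>2)"
proof -
  define K where "K = (\<Sum>j\<in>S. \<Sum>k\<in>S. \<bar>w j\<bar> * \<bar>w k\<bar> * \<pi> j * C j)"
  define F where "F u = psi S w (2*u)" for u
  have Fnn: "u \<ge> 0 \<Longrightarrow> F u \<ge> 0" for u unfolding F_def using assms(1) by (intro psi_nonneg) auto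
  have F0: "F 0 = (\<Sum>j\<in>S. \<pi> j * (w j)\<^sup>2)" unfolding F_def using psi0[OF assms(1)] by simp
  have iter: "F t ^ (2^n) \<le> F 0 ^ (2^n - 1) * F (2^n * t)" for n :: nat
  proof (induction n)
    case 0 then show ?case by simp
  next
    case (Suc n)
    have u: "2^n * t \<ge> 0" using assms(4) by simp
    have "F t ^ (2^Suc n) = (F t ^ (2^n))\<^sup>2" by (simp add: power_mult[symmetric] mult.commute)
    also have "\<dots> \<le> (F 0 ^ (2^n - 1) * F (2^n * t))\<^sup>2"
      by (rule power_mono[OF Suc.IH]) (use Fnn assms(4) in simp)
    also have "\<dots> = (F 0 ^ (2^n - 1))\<^sup>2 * (F (2^n * t))\<^sup>2" by (simp add: power_mult_distrib)
    also have "\<dots> \<le> (F 0 ^ (2^n - 1))\<^sup>2 * (F 0 * F (2^Suc n * t))"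
    proof (rule mult_left_mono)
      show "(F (2^n * t))\<^sup>2 \<le> F 0 * F (2^Suc n * t)"
        using psi_CS[OF assms(1) u, of w] unfolding F_def by (simp add: mult_ac)
    qed simp
    also have "\<dots> = F 0 ^ (2^Suc n - 1) * F (2^Suc n * t)"
    proof -
      have "(F 0 ^ (2^n - 1))\<^sup>2 * F 0 = F 0 ^ (2 * (2^n - 1) + 1)"
        by (simp add: power_mult[symmetric] mult.commute)
      also have "2 * (2^n - 1) + 1 = (2::nat)^Suc n - 1"
      proof -
        have h: "(2::nat)^n \<ge> 1" by simp
        then show ?thesis by (simp; linarith)
      qed
      finally show ?thesis by (simp add: mult_ac)
    qed
    finally show ?case .
  qed
  have dec2: "F (2^n * t) \<le> K * (exp (- 2 * \<epsilon> * t))^(2^n)" for n :: nat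
  proof -
    have "F (2^n * t) \<le> K * exp (- \<epsilon> * (2 * (2^n * t)))"
      unfolding F_def K_def by (rule psi_decay[OF assms(1,2) dec]) (use assms(4) in \<open>auto intro!: mult_nonneg_nonneg\<close>)
    also have "exp (- \<epsilon> * (2 * (2^n * t))) = exp (real (2^n) * (- 2 * \<epsilon> * t))"
      by (simp add: mult_ac)
    also have "\<dots> = (exp (- 2 * \<epsilon> * t))^(2^n)" by (rule exp_of_nat_mult)
    finally show ?thesis .
  qed
  have "F t \<le> exp (- 2 * \<epsilon> * t) * F 0"
  proof (rule iter_bound)
    show "0 \<le> F t" using Fnn assms(4) by simp
    show "0 \<le> F 0" using Fnn by simp
    show "0 < exp (- 2 * \<epsilon> * t)" by simp
    fix n :: nat
    have "F t ^ (2^n) \<le> F 0 ^ (2^n - 1) * F (2^n * t)" by (rule iter)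
    also have "\<dots> \<le> F 0 ^ (2^n - 1) * (K * (exp (- 2 * \<epsilon> * t))^(2^n))"
      by (rule mult_left_mono[OF dec2]) (use Fnn in simp)
    finally show "F t ^ (2^n) \<le> F 0 ^ (2^n - 1) * K * (exp (- 2 * \<epsilon> * t))^(2^n)"
      by (simp add: mult_ac)
  qed
  then show ?thesis unfolding F_def[symmetric] using F0 by simp
qed

end



context mc begin

lemma has_sum_tendsto:
  assumes "(f has_sum S) A"
  shows "((\<lambda>G. \<Sum>j\<in>G. f j) \<longlongrightarrow> S) (finite_subsets_at_top A)"
  using assms unfolding has_sum_def by simp

lemma core_L2:
  assumes w2: "(\<lambda>j. \<pi> j * (w j)\<^sup>2) summable_on UNIV"
    and mean: "((\<lambda>j. \<pi> j * w j) has_sum 0) UNIV"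
    and dec: "\<And>i j s. s \<ge> 0 \<Longrightarrow> \<bar>P s i j - \<pi> j\<bar> \<le> C i * exp (- \<epsilon> * s)"
    and t: "t \<ge> 0"
  shows "(\<lambda>i. \<pi> i * (T t w i)\<^sup>2) summable_on UNIV \<and>
         (\<Sum>\<^sub>\<infinity>i. \<pi> i * (T t w i)\<^sup>2) \<le> exp (- 2 * \<epsilon> * t) * (\<Sum>\<^sub>\<infinity>j. \<pi> j * (w j)\<^sup>2)"
proof -
  define W where "W = (\<Sum>\<^sub>\<infinity>j. \<pi> j * (w j)\<^sup>2)"
  define i0 :: 'a where "i0 = undefined"
  define c where "c G = (\<Sum>j\<in>G. \<pi> j * w j) / \<pi> i0" for G
  define v where "v G j = w j - (if j = i0 then c G else 0)" for G j
  define E where "E = exp (- 2 * \<epsilon> * t)"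
  have bnd: "(\<Sum>i\<in>F. \<pi> i * (T t w i)\<^sup>2) \<le> E * W" if F: "finite F" for F
  proof -
    define lo where "lo G = (\<Sum>i\<in>F. \<pi> i * ((\<Sum>j\<in>G. P t i j * w j) - P t i i0 * c G)\<^sup>2)" for G
    define up where "up G = E * ((\<Sum>j\<in>G. \<pi> j * (w j)\<^sup>2) - \<pi> i0 * (2 * w i0 * c G - (c G)\<^sup>2))" for G
    have c0: "(c \<longlongrightarrow> 0) (finite_subsets_at_top UNIV)"
      unfolding c_def using tendsto_divide[OF has_sum_tendsto[OF mean] tendsto_const, of "\<pi> i0"] pipos[of i0]
      by simp
    have Tlim: "((\<lambda>G. \<Sum>j\<in>G. P t i j * w j) \<longlongrightarrow> T t w i) (finite_subsets_at_top UNIV)" for i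
      unfolding T_def by (rule has_sum_tendsto[OF has_sum_infsum[OF summable_Pw[OF t w2]]])
    have Wlim: "((\<lambda>G. \<Sum>j\<in>G. \<pi> j * (w j)\<^sup>2) \<longlongrightarrow> W) (finite_subsets_at_top UNIV)"
      unfolding W_def by (rule has_sum_tendsto[OF has_sum_infsum[OF w2]])
    have "(lo \<longlongrightarrow> (\<Sum>i\<in>F. \<pi> i * (T t w i - P t i i0 * 0)\<^sup>2)) (finite_subsets_at_top UNIV)"
      unfolding lo_def by (intro tendsto_sum tendsto_mult tendsto_power tendsto_diff tendsto_const Tlim c0)
    then have lolim: "(lo \<longlongrightarrow> (\<Sum>i\<in>F. \<pi> i * (T t w i)\<^sup>2)) (finite_subsets_at_top UNIV)" by simp
    have "(up \<longlongrightarrow> E * (W - \<pi> i0 * (2 * w i0 * 0 - 0\<^sup>2))) (finite_subsets_at_top UNIV)"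
      unfolding up_def by (intro tendsto_mult tendsto_power tendsto_diff tendsto_const Wlim c0)
    then have uplim: "(up \<longlongrightarrow> E * W) (finite_subsets_at_top UNIV)" by simp
    have ev: "eventually (\<lambda>G. lo G \<le> up G) (finite_subsets_at_top UNIV)"
      unfolding eventually_finite_subsets_at_top
    proof (intro exI[of _ "{i0}"] conjI allI impI)
      fix G assume G: "finite G \<and> {i0} \<subseteq> G \<and> G \<subseteq> UNIV"
      then have fG: "finite G" and iG: "i0 \<in> G" by auto
      have sv: "(\<Sum>j\<in>G. P t i j * v G j) = (\<Sum>j\<in>G. P t i j * w j) - P t i i0 * c G" for i
      proof -
        have "(\<Sum>j\<in>G. P t i j * v G j) = (\<Sum>j\<in>G. P t i j * w j - (if j = i0 then P t i j * c G else 0))"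
          by (intro sum.cong refl) (simp add: v_def right_diff_distrib)
        also have "\<dots> = (\<Sum>j\<in>G. P t i j * w j) - (\<Sum>j\<in>G. if j = i0 then P t i j * c G else 0)"
          by (rule sum_subtractf)
        also have "(\<Sum>j\<in>G. if j = i0 then P t i j * c G else 0) = P t i i0 * c G"
          using fG iG by simp
        finally show ?thesis .
      qed
      have sv2: "(\<Sum>j\<in>G. \<pi> j * (v G j)\<^sup>2) = (\<Sum>j\<in>G. \<pi> j * (w j)\<^sup>2) - \<pi> i0 * (2 * w i0 * c G - (c G)\<^sup>2)"
      proof -
        have "(\<Sum>j\<in>G. \<pi> j * (v G j)\<^sup>2) = (\<Sum>j\<in>G. \<pi> j * (w j)\<^sup>2 - (if j = i0 then \<pi> j * (2 * w j * c G - (c G)\<^sup>2) else 0))"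
          by (intro sum.cong refl) (simp add: v_def power2_eq_square algebra_simps)
        also have "\<dots> = (\<Sum>j\<in>G. \<pi> j * (w j)\<^sup>2) - (\<Sum>j\<in>G. if j = i0 then \<pi> j * (2 * w j * c G - (c G)\<^sup>2) else 0)"
          by (rule sum_subtractf)
        also have "(\<Sum>j\<in>G. if j = i0 then \<pi> j * (2 * w j * c G - (c G)\<^sup>2) else 0) = \<pi> i0 * (2 * w i0 * c G - (c G)\<^sup>2)"
          using fG iG by simp
        finally show ?thesis .
      qed
      have sv1: "(\<Sum>j\<in>G. \<pi> j * v G j) = 0"
      proof -
        have "(\<Sum>j\<in>G. \<pi> j * v G j) = (\<Sum>j\<in>G. \<pi> j * w j - (if j = i0 then \<pi> j * c G else 0))"
          by (intro sum.cong refl) (simp add: v_def right_diff_distrib)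
        also have "\<dots> = (\<Sum>j\<in>G. \<pi> j * w j) - (\<Sum>j\<in>G. if j = i0 then \<pi> j * c G else 0)"
          by (rule sum_subtractf)
        also have "(\<Sum>j\<in>G. if j = i0 then \<pi> j * c G else 0) = \<pi> i0 * c G"
          using fG iG by simp
        also have "\<pi> i0 * c G = (\<Sum>j\<in>G. \<pi> j * w j)"
          unfolding c_def using pipos[of i0] by simp
        finally show ?thesis by simp
      qed
      have "lo G = (\<Sum>i\<in>F. \<pi> i * (\<Sum>j\<in>G. P t i j * v G j)\<^sup>2)"
        unfolding lo_def sv ..
      also have "\<dots> \<le> psi G (v G) (2 * t)"
        by (rule finite_sum_le_has_sum[OF Phi_has_sum[OF fG t] F])
           (auto intro: mult_nonneg_nonneg[OF pinn zero_le_power2])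
      also have "\<dots> \<le> exp (- 2 * \<epsilon> * t) * (\<Sum>j\<in>G. \<pi> j * (v G j)\<^sup>2)"
        by (rule core_fin[OF fG sv1 dec t])
      also have "\<dots> = up G" unfolding up_def E_def sv2 ..
      finally show "lo G \<le> up G" .
    qed auto
    show ?thesis
      by (rule tendsto_le[OF _ uplim lolim ev]) simp
  qed
  have nn: "\<pi> i * (T t w i)\<^sup>2 \<ge> 0" for i by (rule mult_nonneg_nonneg[OF pinn zero_le_power2])
  have sm: "(\<lambda>i. \<pi> i * (T t w i)\<^sup>2) summable_on UNIV"
    by (rule nonneg_bdd_above_summable_on) (use nn bnd in \<open>auto intro!: bdd_aboveI2\<close>)
  moreover have "(\<Sum>\<^sub>\<infinity>i. \<pi> i * (T t w i)\<^sup>2) \<le> E * W"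
    by (rule infsum_le_finite_sums[OF sm]) (use bnd in auto)
  ultimately show ?thesis unfolding E_def W_def by simp
qed

end



lemma has_sum_single_ite:
  "((\<lambda>k. if k = i then a else 0) has_sum (a::real)) UNIV"
  by (rule has_sum_finite_neutralI[of "{i}"]) auto

lemma abs_le_half: "\<bar>u::real\<bar> \<le> (1 + u\<^sup>2) / 2"
proof -
  have "0 \<le> (\<bar>u\<bar> - 1)\<^sup>2" by simp
  then show ?thesis by (simp add: power2_eq_square algebra_simps)
qed

lemma sq_diff_le: "((u::real) - m)\<^sup>2 \<le> 2 * u\<^sup>2 + 2 * m\<^sup>2"
proof -
  have "0 \<le> (u + m)\<^sup>2" by simp
  then show ?thesis by (simp add: power2_eq_square algebra_simps)
qed

context mc begin

lemma pisum_summable: "\<pi> summable_on UNIV" using pisum by (auto simp: summable_on_def)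

lemma partB:
  assumes f1: "\<And>i. f i \<ge> 1" and E: "exp_f_ergodic_rate P \<pi> f \<epsilon>"
  shows "L2_exp_conv_rate P \<pi> f \<epsilon>"
proof -
  from E have epos: "\<epsilon> > 0" and "\<exists>C :: 'a \<Rightarrow> real. \<forall>i. \<forall>t\<ge>0.
        (\<lambda>j. f j * \<bar>P t i j - \<pi> j\<bar>) summable_on UNIV \<and>
        (\<Sum>\<^sub>\<infinity>j. f j * \<bar>P t i j - \<pi> j\<bar>) \<le> C i * exp (- \<epsilon> * t)"
    unfolding exp_f_ergodic_rate_def by auto
  then obtain C :: "'a \<Rightarrow> real" where C: "\<And>i t. t \<ge> 0 \<Longrightarrow>
        (\<lambda>j. f j * \<bar>P t i j - \<pi> j\<bar>) summable_on UNIV \<and>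
        (\<Sum>\<^sub>\<infinity>j. f j * \<bar>P t i j - \<pi> j\<bar>) \<le> C i * exp (- \<epsilon> * t)" by blast
  have dec: "\<bar>P s i j - \<pi> j\<bar> \<le> C i * exp (- \<epsilon> * s)" if s: "s \<ge> 0" for i j s
  proof -
    have "\<bar>P s i j - \<pi> j\<bar> \<le> f j * \<bar>P s i j - \<pi> j\<bar>"
      using f1[of j] by (simp add: mult_le_cancel_right1)
    also have "\<dots> = (\<Sum>k\<in>{j}. f k * \<bar>P s i k - \<pi> k\<bar>)" by simp
    also have "\<dots> \<le> (\<Sum>\<^sub>\<infinity>k. f k * \<bar>P s i k - \<pi> k\<bar>)"
      by (rule finite_sum_le_infsum) (use C[OF s, of i] in \<open>auto intro!: mult_nonneg_nonneg order_trans[OF zero_le_one f1]\<close>)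
    also have "\<dots> \<le> C i * exp (- \<epsilon> * s)" using C[OF s, of i] by simp
    finally show ?thesis .
  qed
  have fpos: "f i > 0" for i using f1[of i] by simp
  show ?thesis unfolding L2_exp_conv_rate_def
  proof (intro conjI epos allI impI)
    fix t :: real and g assume t: "t \<ge> 0" and gL2: "in_L2 (nu \<pi> f) g"
    define u where "u j = f j * g j" for j
    define m where "m = (\<Sum>\<^sub>\<infinity>j. \<pi> j * u j)"
    define w where "w j = u j - m" for j
    have u2: "(\<lambda>j. \<pi> j * (u j)\<^sup>2) summable_on UNIV"
    proof -
      have "(\<lambda>j. nu \<pi> f j * (g j)\<^sup>2) summable_on UNIV" using gL2 unfolding in_L2_def .
      moreover have "nu \<pi> f j * (g j)\<^sup>2 = \<pi> j * (u j)\<^sup>2" for j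
        unfolding nu_def u_def by (simp add: power_mult_distrib mult_ac)
      ultimately show ?thesis by simp
    qed
    have u1: "(\<lambda>j. \<pi> j * u j) summable_on UNIV"
    proof (rule summable_by_bound)
      show "(\<lambda>j. (\<pi> j + \<pi> j * (u j)\<^sup>2) / 2) summable_on UNIV"
        by (rule summable_on_div[OF summable_on_add[OF pisum_summable u2]])
      fix j
      have "\<bar>\<pi> j * u j\<bar> = \<pi> j * \<bar>u j\<bar>" using pinn[of j] by (simp add: abs_mult)
      also have "\<dots> \<le> \<pi> j * ((1 + (u j)\<^sup>2) / 2)" by (rule mult_left_mono[OF abs_le_half pinn])
      finally show "\<bar>\<pi> j * u j\<bar> \<le> (\<pi> j + \<pi> j * (u j)\<^sup>2) / 2" by (simp add: algebra_simps)
    qed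
    have w2: "(\<lambda>j. \<pi> j * (w j)\<^sup>2) summable_on UNIV"
    proof (rule summable_by_bound)
      show "(\<lambda>j. 2 * (\<pi> j * (u j)\<^sup>2) + (2 * m\<^sup>2) * \<pi> j) summable_on UNIV"
        by (intro summable_on_add summable_on_cmult_right u2 pisum_summable)
      fix j
      have "\<bar>\<pi> j * (w j)\<^sup>2\<bar> = \<pi> j * (w j)\<^sup>2" using pinn[of j] by simp
      also have "\<dots> \<le> \<pi> j * (2 * (u j)\<^sup>2 + 2 * m\<^sup>2)"
        unfolding w_def by (rule mult_left_mono[OF sq_diff_le pinn])
      finally show "\<bar>\<pi> j * (w j)\<^sup>2\<bar> \<le> 2 * (\<pi> j * (u j)\<^sup>2) + (2 * m\<^sup>2) * \<pi> j"
        by (simp add: algebra_simps)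
    qed
    have mean: "((\<lambda>j. \<pi> j * w j) has_sum 0) UNIV"
    proof -
      have "((\<lambda>j. \<pi> j * u j + (- m) * \<pi> j) has_sum (m + (- m) * 1)) UNIV"
        by (intro has_sum_add has_sum_cmult_right pisum) (use u1 in \<open>simp add: m_def\<close>)
      then show ?thesis by (simp add: w_def algebra_simps)
    qed
    from core_L2[OF w2 mean dec t]
    have sT: "(\<lambda>i. \<pi> i * (T t w i)\<^sup>2) summable_on UNIV"
      and bT: "(\<Sum>\<^sub>\<infinity>i. \<pi> i * (T t w i)\<^sup>2) \<le> exp (- 2 * \<epsilon> * t) * (\<Sum>\<^sub>\<infinity>j. \<pi> j * (w j)\<^sup>2)"
      by auto
    have Tw: "T t w i = T t u i - m" for i
    proof -
      have "((\<lambda>j. P t i j * u j + (- m) * P t i j) has_sum (T t u i + (- m) * 1)) UNIV"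
        by (intro has_sum_add has_sum_cmult_right Psum t)
           (use summable_Pw[OF t u2, of i] in \<open>simp add: T_def\<close>)
      then have "((\<lambda>j. P t i j * w j) has_sum (T t u i - m)) UNIV"
        by (simp add: w_def algebra_simps)
      then show ?thesis unfolding T_def by (rule infsumI)
    qed
    have D: "h_transform P f t g i - pi_f \<pi> f g i = T t w i / f i" for i
    proof -
      have "h_transform P f t g i = T t u i / f i"
        unfolding h_transform_def T_def u_def ..
      moreover have "pi_f \<pi> f g i = m / f i"
        unfolding pi_f_def m_def u_def by (simp add: mult.assoc)
      ultimately show ?thesis using Tw by (simp add: diff_divide_distrib)
    qed
    have G: "g i - pi_f \<pi> f g i = w i / f i" for i
    proof -
      have "pi_f \<pi> f g i = m / f i"
        unfolding pi_f_def m_def u_def by (simp add: mult.assoc)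
      then show ?thesis using fpos[of i] by (simp add: w_def u_def field_simps)
    qed
    have nuD: "nu \<pi> f i * (h_transform P f t g i - pi_f \<pi> f g i)\<^sup>2 = \<pi> i * (T t w i)\<^sup>2" for i
      unfolding D nu_def using fpos[of i] by (simp add: power_divide field_simps)
    have nuG: "nu \<pi> f i * (g i - pi_f \<pi> f g i)\<^sup>2 = \<pi> i * (w i)\<^sup>2" for i
      unfolding G nu_def using fpos[of i] by (simp add: power_divide field_simps)
    show "in_L2 (nu \<pi> f) (\<lambda>i. h_transform P f t g i - pi_f \<pi> f g i)"
      unfolding in_L2_def nuD using sT .
    have "L2_norm (nu \<pi> f) (\<lambda>i. h_transform P f t g i - pi_f \<pi> f g i) = sqrt (\<Sum>\<^sub>\<infinity>i. \<pi> i * (T t w i)\<^sup>2)"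
      unfolding L2_norm_def nuD ..
    also have "\<dots> \<le> sqrt (exp (- 2 * \<epsilon> * t) * (\<Sum>\<^sub>\<infinity>j. \<pi> j * (w j)\<^sup>2))"
      using bT by simp
    also have "\<dots> = exp (- \<epsilon> * t) * sqrt (\<Sum>\<^sub>\<infinity>j. \<pi> j * (w j)\<^sup>2)"
    proof -
      have "exp (- 2 * \<epsilon> * t) = (exp (- \<epsilon> * t))\<^sup>2"
        by (simp add: power2_eq_square exp_add[symmetric])
      then show ?thesis by (simp add: real_sqrt_mult)
    qed
    also have "sqrt (\<Sum>\<^sub>\<infinity>j. \<pi> j * (w j)\<^sup>2) = L2_norm (nu \<pi> f) (\<lambda>i. g i - pi_f \<pi> f g i)"
      unfolding L2_norm_def nuG ..
    finally show "L2_norm (nu \<pi> f) (\<lambda>i. h_transform P f t g i - pi_f \<pi> f g i)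
          \<le> L2_norm (nu \<pi> f) (\<lambda>i. g i - pi_f \<pi> f g i) * exp (- \<epsilon> * t)"
      by (simp add: mult.commute)
  qed
qed

end



context mc begin

lemma partA:
  assumes f1: "\<And>i. f i \<ge> 1" and f2: "(\<lambda>i. \<pi> i * (f i)\<^sup>2) summable_on UNIV"
    and L: "L2_exp_conv_rate P \<pi> f \<sigma>"
  shows "exp_f_ergodic_rate P \<pi> f \<sigma>"
proof -
  have spos: "\<sigma> > 0" using L unfolding L2_exp_conv_rate_def by auto
  have fpos: "f i > 0" for i using f1[of i] by simp
  define gi where "gi i j = (if j = i then 1 / (\<pi> i * f i) else 0)" for i j
  define C where "C i = sqrt (\<Sum>\<^sub>\<infinity>j. \<pi> j * (f j)\<^sup>2) * L2_norm (nu \<pi> f) (\<lambda>j. gi i j - pi_f \<pi> f (gi i) j)" for i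
  show ?thesis unfolding exp_f_ergodic_rate_def
  proof (intro conjI spos exI[of _ C] allI impI)
    fix i and t :: real assume t: "t \<ge> 0"
    have gL2: "in_L2 (nu \<pi> f) (gi i)"
      unfolding in_L2_def
      by (rule finite_nonzero_values_imp_summable_on, rule finite_subset[of _ "{i}"])
         (auto simp: gi_def)
    from L t gL2 have LD: "in_L2 (nu \<pi> f) (\<lambda>j. h_transform P f t (gi i) j - pi_f \<pi> f (gi i) j)"
      and LN: "L2_norm (nu \<pi> f) (\<lambda>j. h_transform P f t (gi i) j - pi_f \<pi> f (gi i) j)
          \<le> L2_norm (nu \<pi> f) (\<lambda>j. gi i j - pi_f \<pi> f (gi i) j) * exp (- \<sigma> * t)"
      unfolding L2_exp_conv_rate_def by auto
    define q where "q j = P t i j / \<pi> j - 1" for j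
    have hD: "h_transform P f t (gi i) j - pi_f \<pi> f (gi i) j = q j / f j" for j
    proof -
      have "(\<lambda>k. P t j k * (f k * gi i k)) = (\<lambda>k. if k = i then P t j i / \<pi> i else 0)"
        using fpos[of i] pipos[of i] by (auto simp: gi_def)
      then have "(\<Sum>\<^sub>\<infinity>k. P t j k * (f k * gi i k)) = P t j i / \<pi> i"
        by (simp only:) (rule infsumI[OF has_sum_single_ite])
      then have h: "h_transform P f t (gi i) j = (P t j i / \<pi> i) / f j"
        unfolding h_transform_def by simp
      have "(\<lambda>k. \<pi> k * f k * gi i k) = (\<lambda>k. if k = i then 1 else 0)"
        using fpos[of i] pipos[of i] by (auto simp: gi_def)
      then have "(\<Sum>\<^sub>\<infinity>k. \<pi> k * f k * gi i k) = 1"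
        by (simp only:) (rule infsumI[OF has_sum_single_ite])
      then have p: "pi_f \<pi> f (gi i) j = 1 / f j"
        unfolding pi_f_def by simp
      show ?thesis unfolding h p q_def using P_ratio[OF t, of i j]
        by (simp add: diff_divide_distrib)
    qed
    have nuq: "nu \<pi> f j * (h_transform P f t (gi i) j - pi_f \<pi> f (gi i) j)\<^sup>2 = \<pi> j * (q j)\<^sup>2" for j
      unfolding hD nu_def using fpos[of j] by (simp add: power_divide field_simps)
    have q2: "(\<lambda>j. \<pi> j * (q j)\<^sup>2) summable_on UNIV"
      using LD unfolding in_L2_def nuq .
    have Nq: "L2_norm (nu \<pi> f) (\<lambda>j. h_transform P f t (gi i) j - pi_f \<pi> f (gi i) j) = sqrt (\<Sum>\<^sub>\<infinity>j. \<pi> j * (q j)\<^sup>2)"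
      unfolding L2_norm_def nuq ..
    have trm: "f j * \<bar>P t i j - \<pi> j\<bar> = \<pi> j * f j * \<bar>q j\<bar>" for j
    proof -
      have "P t i j - \<pi> j = \<pi> j * q j" using pipos[of j] by (simp add: q_def field_simps)
      then show ?thesis using pinn[of j] by (simp add: abs_mult)
    qed
    have sm: "(\<lambda>j. f j * \<bar>P t i j - \<pi> j\<bar>) summable_on UNIV"
      unfolding trm
    proof (rule summable_by_bound)
      show "(\<lambda>j. (\<pi> j * (f j)\<^sup>2 + \<pi> j * (q j)\<^sup>2) / 2) summable_on UNIV"
        by (rule summable_on_div[OF summable_on_add[OF f2 q2]])
      fix j
      have "\<bar>\<pi> j * f j * \<bar>q j\<bar>\<bar> = \<pi> j * \<bar>f j * q j\<bar>" using pinn[of j] by (simp add: abs_mult)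
      also have "\<dots> \<le> \<pi> j * (((f j)\<^sup>2 / 1 + 1 * (q j)\<^sup>2) / 2)"
        by (rule mult_left_mono[OF amgm_weighted pinn]) simp
      finally show "\<bar>\<pi> j * f j * \<bar>q j\<bar>\<bar> \<le> (\<pi> j * (f j)\<^sup>2 + \<pi> j * (q j)\<^sup>2) / 2"
        by (simp add: algebra_simps)
    qed
    have fin: "(\<Sum>j\<in>F. \<pi> j * f j * \<bar>q j\<bar>) \<le> sqrt (\<Sum>\<^sub>\<infinity>j. \<pi> j * (f j)\<^sup>2) * sqrt (\<Sum>\<^sub>\<infinity>j. \<pi> j * (q j)\<^sup>2)"
      if F: "finite F" for F
    proof -
      have cs: "(\<Sum>j\<in>F. \<pi> j * f j * \<bar>q j\<bar>)\<^sup>2 \<le> (\<Sum>j\<in>F. \<pi> j * (f j)\<^sup>2) * (\<Sum>j\<in>F. \<pi> j * \<bar>q j\<bar>\<^sup>2)"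
        by (rule weighted_CS) (rule pinn)
      have a: "(\<Sum>j\<in>F. \<pi> j * (f j)\<^sup>2) \<le> (\<Sum>\<^sub>\<infinity>j. \<pi> j * (f j)\<^sup>2)"
        by (rule finite_sum_le_infsum[OF f2 F]) (auto intro: mult_nonneg_nonneg[OF pinn zero_le_power2])
      have b: "(\<Sum>j\<in>F. \<pi> j * (q j)\<^sup>2) \<le> (\<Sum>\<^sub>\<infinity>j. \<pi> j * (q j)\<^sup>2)"
        by (rule finite_sum_le_infsum[OF q2 F]) (auto intro: mult_nonneg_nonneg[OF pinn zero_le_power2])
      have a0: "0 \<le> (\<Sum>j\<in>F. \<pi> j * (f j)\<^sup>2)" by (rule sum_nonneg) (rule mult_nonneg_nonneg[OF pinn zero_le_power2])
      have b0: "0 \<le> (\<Sum>j\<in>F. \<pi> j * (q j)\<^sup>2)" by (rule sum_nonneg) (rule mult_nonneg_nonneg[OF pinn zero_le_power2])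
      have "(\<Sum>j\<in>F. \<pi> j * f j * \<bar>q j\<bar>) \<le> sqrt ((\<Sum>j\<in>F. \<pi> j * (f j)\<^sup>2) * (\<Sum>j\<in>F. \<pi> j * (q j)\<^sup>2))"
        using cs by (simp add: real_le_rsqrt)
      also have "\<dots> \<le> sqrt ((\<Sum>\<^sub>\<infinity>j. \<pi> j * (f j)\<^sup>2) * (\<Sum>\<^sub>\<infinity>j. \<pi> j * (q j)\<^sup>2))"
        by (intro real_sqrt_le_mono mult_mono a b b0) (use a0 a in linarith)
      finally show ?thesis by (simp add: real_sqrt_mult)
    qed
    have "(\<Sum>\<^sub>\<infinity>j. f j * \<bar>P t i j - \<pi> j\<bar>) \<le> sqrt (\<Sum>\<^sub>\<infinity>j. \<pi> j * (f j)\<^sup>2) * sqrt (\<Sum>\<^sub>\<infinity>j. \<pi> j * (q j)\<^sup>2)"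
      by (rule infsum_le_finite_sums[OF sm]) (simp add: trm fin)
    also have "\<dots> \<le> sqrt (\<Sum>\<^sub>\<infinity>j. \<pi> j * (f j)\<^sup>2) *
        (L2_norm (nu \<pi> f) (\<lambda>j. gi i j - pi_f \<pi> f (gi i) j) * exp (- \<sigma> * t))"
      by (rule mult_left_mono) (use LN Nq infsum_nonneg[of UNIV "\<lambda>j. \<pi> j * (f j)\<^sup>2"] pinn in auto)
    finally show "(\<Sum>\<^sub>\<infinity>j. f j * \<bar>P t i j - \<pi> j\<bar>) \<le> C i * exp (- \<sigma> * t)"
      by (simp add: C_def mult.assoc)
    show "(\<lambda>j. f j * \<bar>P t i j - \<pi> j\<bar>) summable_on UNIV" by (rule sm)
  qed
qed

end



theorem theorem3p3:
  fixes P :: "real \<Rightarrow> 'a::countable \<Rightarrow> 'a \<Rightarrow> real"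
    and \<pi> f :: "'a \<Rightarrow> real"
  assumes "positive_recurrent P"
    and "stationary_distribution P \<pi>"
    and "reversible P \<pi>"
    and "\<forall>i. f i \<ge> 1"
    and "(\<lambda>i. \<pi> i * (f i)^2) summable_on UNIV"
  shows "(exp_f_ergodic P \<pi> f \<longleftrightarrow> L2_exp_conv P \<pi> f) \<and> eps_max P \<pi> f = sigma_max P \<pi> f"
proof -
  have ms: "markov_semigroup P" and irr: "irreducible_chain P"
    using assms(1) unfolding positive_recurrent_def by auto
  have pinn: "\<And>i. \<pi> i \<ge> 0" and pis: "(\<pi> has_sum 1) UNIV"
    and stat: "\<And>t j. t \<ge> 0 \<Longrightarrow> ((\<lambda>i. \<pi> i * P t i j) has_sum \<pi> j) UNIV"
    using assms(2) unfolding stationary_distribution_def by auto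
  have Pnn: "\<And>t i j. t \<ge> 0 \<Longrightarrow> P t i j \<ge> 0" using ms unfolding markov_semigroup_def by auto
  obtain k where k: "\<pi> k > 0"
  proof (rule ccontr)
    assume "\<not> thesis"
    have z: "\<pi> k' = 0" for k'
    proof (rule ccontr)
      assume "\<pi> k' \<noteq> 0"
      then have "\<pi> k' > 0" using pinn[of k'] by simp
      then show False using that[of k'] \<open>\<not> thesis\<close> by blast
    qed
    then have "\<pi> = (\<lambda>_. 0)" by auto
    then have "(\<pi> has_sum 0) UNIV" by simp
    then show False using pis has_sum_unique by fastforce
  qed
  have pipos: "\<pi> j > 0" for j
  proof -
    obtain t where t: "t > 0" "P t k j > 0" using irr unfolding irreducible_chain_def by blast
    have "(\<Sum>i\<in>{k}. \<pi> i * P t i j) \<le> \<pi> j"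
      by (rule finite_sum_le_has_sum[OF stat]) (use t in \<open>auto intro!: mult_nonneg_nonneg pinn Pnn\<close>)
    moreover have "\<pi> k * P t k j > 0" using k t by simp
    ultimately show ?thesis by simp
  qed
  interpret mc P \<pi>
  proof
    show "\<And>t i j. 0 \<le> t \<Longrightarrow> 0 \<le> P t i j" by (rule Pnn)
    show "\<And>t i. 0 \<le> t \<Longrightarrow> ((\<lambda>j. P t i j) has_sum 1) UNIV"
      using ms unfolding markov_semigroup_def by auto
    show "\<And>i j. P 0 i j = (if i = j then 1 else 0)"
      using ms unfolding markov_semigroup_def by auto
    show "\<And>s t i k. 0 \<le> s \<Longrightarrow> 0 \<le> t \<Longrightarrow> ((\<lambda>j. P s i j * P t j k) has_sum P (s + t) i k) UNIV"
      using ms unfolding markov_semigroup_def by auto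
    show "\<And>i. 0 < \<pi> i" by (rule pipos)
    show "(\<pi> has_sum 1) UNIV" by (rule pis)
    show "\<And>t i j. 0 \<le> t \<Longrightarrow> \<pi> i * P t i j = \<pi> j * P t j i"
      using assms(3) unfolding reversible_def by auto
  qed
  have f1: "\<And>i. f i \<ge> 1" using assms(4) by auto
  have eq: "exp_f_ergodic_rate P \<pi> f x \<longleftrightarrow> L2_exp_conv_rate P \<pi> f x" for x
    using partA[OF f1 assms(5)] partB[of f, OF f1] by blast
  show ?thesis
    unfolding exp_f_ergodic_def L2_exp_conv_def eps_max_def sigma_max_def eq by simp
qed



end
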